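(* Assume $n>3t$, and that every non-faulty process invokes the SBV-Broadcast instance with tag $T$, where the set of input values of the non-faulty processes has at most two elements. Then the SBV-Broadcast algorithm (described in the context) guarantees all of the following. (SBV-Termination) Every invocation by a non-faulty process returns. (SBV-Obligation) The set $\mathit{view}_i$ returned to a non-faulty $p_i$ is non-empty. (SBV-Justification) If $p_i$ is non-faulty and $v\in \mathit{view}_i$, then some non-faulty process invoked the instance with input $v$. (SBV-Inclusion) If $p_i,p_j$ are non-faulty and $\mathit{view}_i=\{v\}$, then $v\in \mathit{view}_j$. (SBV-Uniformity) If all non-faulty processes invoke the instance with the same input $v$, then $\mathit{view}_i=\{v\}$ at every non-faulty $p_i$. (SBV-Singleton) If $p_i,p_j$ are non-faulty, $\mathit{view}_i=\{v\}$ and $\mathit{view}_j=\{w\}$, then $v=w$. (SBV-Binvalues) The (growing) set $\mathit{bin}_i$ returned to a non-faulty $p_i$ satisfies: (a) if $x\in \mathit{bin}_i$ then some non-faulty process invoked the instance with input $x$; (b) if $x$ is ever added to $\mathit{bin}_i$ at a non-faulty $p_i$, then eventually $x\in \mathit{bin}_j$ at every non-faulty $p_j$; (c) eventually $\mathit{bin}_i\neq\emptyset$; (d) if all non-faulty processes input the same $v$, then $v$ is eventually in $\mathit{bin}_i$ of every non-faulty $p_i$; and moreover (e) for all non-faulty $p_i,p_j$, eventually $\mathit{view}_j\subseteq \mathit{bin}_i$.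
   Context: System model: $n$ asynchronous sequential processes $p_1,\dots,p_n$, of which at most $t$ are Byzantine (behave arbitrarily, may collude); the others are non-faulty. Processes communicate over reliable asynchronous point-to-point channels between every pair: messages between non-faulty processes are eventually delivered, unaltered, not duplicated, and the receiver knows the identity of the sender; there is no bound on delays and the adversary controls delivery order. "Broadcast $m$" means sending $m$ to every process (including oneself). When counting messages "received from $k$ distinct processes", at most one message per sender is counted. BV-Broadcast with tag $T$ and input $v$ at process $p_i$: set $\mathit{bin}_i\leftarrow\emptyset$; broadcast $\mathrm{BVAL}(T,v)$; return (a reference to) $\mathit{bin}_i$, which may keep growing afterwards. In the background, for every value $x$: when $\mathrm{BVAL}(T,x)$ has been received from $t+1$ distinct processes and $p_i$ has not yet broadcast $\mathrm{BVAL}(T,x)$, $p_i$ broadcasts $\mathrm{BVAL}(T,x)$; when $\mathrm{BVAL}(T,x)$ has been received from $2t+1$ distinct processes, $p_i$ adds $x$ to $\mathit{bin}_i$. SBV-Broadcast with tag $T$ and input $v$ at $p_i$: $\mathit{bin}_i\leftarrow$ BV-Broadcast with tag $T$ and input $v$; wait until $\mathit{bin}_i\neq\emptyset$; broadcast $\mathrm{AUX}(T,w)$ for some $w\in\mathit{bin}_i$; wait until there are $n-t$ distinct processes $p_j$ from which a message $\mathrm{AUX}(T,w_j)$ has been received with $w_j\in \mathit{bin}_i$ (the current value of the growing set); let $\mathit{view}_i$ be the set of these values $w_j$; return $(\mathit{view}_i,\mathit{bin}_i)$ ($\mathit{view}_i$ is fixed upon return, $\mathit{bin}_i$ may still grow).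 *)

theory Defs
  imports Main
begin

text \<open>Model of one SBV-Broadcast instance (single tag, so the tag is left implicit)
 in an asynchronous message-passing system with Byzantine processes.
 Processes form a finite type 'p, n = CARD('p); F is the set of faulty processes.\<close>

datatype 'v msg = BVAL 'v | AUX 'v

record ('p, 'v) lst =
  started :: bool
  rcvd    :: "('p \<times> 'v msg) set"
  bvsent  :: "'v set"              \<comment> \<open>values x for which BVAL(x) has been broadcast\<close>
  bin     :: "'v set"
  aux     :: "'v option"           \<comment> \<open>value w of the AUX(w) broadcast, if any\<close>
  view    :: "'v set option"

record ('p, 'v) cfg =
  net :: "('p \<times> 'p \<times> 'v msg) set"  \<comment> \<open>messages in transit: (sender, receiver, message)\<close>
  ls  :: "'p \<Rightarrow> ('p, 'v) lst"

definition init_lst :: "('p, 'v) lst" where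
  "init_lst = \<lparr>started = False, rcvd = {}, bvsent = {}, bin = {}, aux = None, view = None\<rparr>"

definition init_cfg :: "('p, 'v) cfg" where
  "init_cfg = \<lparr>net = {}, ls = (\<lambda>_. init_lst)\<rparr>"

definition bcast :: "'p \<Rightarrow> 'v msg \<Rightarrow> ('p \<times> 'p \<times> 'v msg) set" where
  "bcast i m = (\<lambda>k. (i, k, m)) ` UNIV"

definition nbval :: "('p, 'v) lst \<Rightarrow> 'v \<Rightarrow> nat" where
  "nbval s x = card {j. (j, BVAL x) \<in> rcvd s}"

definition start_en :: "('p, 'v) cfg \<Rightarrow> 'p \<Rightarrow> bool" where
  "start_en c i = (\<not> started (ls c i))"

definition echo_en :: "nat \<Rightarrow> ('p, 'v) cfg \<Rightarrow> 'p \<Rightarrow> 'v \<Rightarrow> bool" where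
  "echo_en t c i x = (started (ls c i) \<and> x \<notin> bvsent (ls c i) \<and> t + 1 \<le> nbval (ls c i) x)"

definition bin_en :: "nat \<Rightarrow> ('p, 'v) cfg \<Rightarrow> 'p \<Rightarrow> 'v \<Rightarrow> bool" where
  "bin_en t c i x = (started (ls c i) \<and> x \<notin> bin (ls c i) \<and> 2 * t + 1 \<le> nbval (ls c i) x)"

definition aux_en :: "('p, 'v) cfg \<Rightarrow> 'p \<Rightarrow> bool" where
  "aux_en c i = (started (ls c i) \<and> aux (ls c i) = None \<and> bin (ls c i) \<noteq> {})"

text \<open>S: n - t distinct senders; f j: the (single counted) AUX value from j, which lies in bin_i.\<close>
definition ret_cond :: "nat \<Rightarrow> ('p::finite, 'v) cfg \<Rightarrow> 'p \<Rightarrow> 'p set \<Rightarrow> ('p \<Rightarrow> 'v) \<Rightarrow> bool" where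
  "ret_cond t c i S f = (card S = card (UNIV :: 'p set) - t \<and>
      (\<forall>j\<in>S. (j, AUX (f j)) \<in> rcvd (ls c i) \<and> f j \<in> bin (ls c i)))"

definition ret_en :: "nat \<Rightarrow> ('p::finite, 'v) cfg \<Rightarrow> 'p \<Rightarrow> bool" where
  "ret_en t c i = (started (ls c i) \<and> aux (ls c i) \<noteq> None \<and> view (ls c i) = None \<and>
      (\<exists>S f. ret_cond t c i S f))"

inductive step :: "'p set \<Rightarrow> nat \<Rightarrow> ('p \<Rightarrow> 'v) \<Rightarrow> ('p::finite, 'v) cfg \<Rightarrow> ('p, 'v) cfg \<Rightarrow> bool"
  for F t inp where
  Start: "\<lbrakk> i \<notin> F; start_en c i \<rbrakk> \<Longrightarrow>
     step F t inp c \<lparr>net = net c \<union> bcast i (BVAL (inp i)),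
       ls = (ls c)(i := (ls c i)\<lparr>started := True, bvsent := insert (inp i) (bvsent (ls c i))\<rparr>)\<rparr>"
| Echo: "\<lbrakk> i \<notin> F; echo_en t c i x \<rbrakk> \<Longrightarrow>
     step F t inp c \<lparr>net = net c \<union> bcast i (BVAL x),
       ls = (ls c)(i := (ls c i)\<lparr>bvsent := insert x (bvsent (ls c i))\<rparr>)\<rparr>"
| AddBin: "\<lbrakk> i \<notin> F; bin_en t c i x \<rbrakk> \<Longrightarrow>
     step F t inp c \<lparr>net = net c,
       ls = (ls c)(i := (ls c i)\<lparr>bin := insert x (bin (ls c i))\<rparr>)\<rparr>"
| SendAux: "\<lbrakk> i \<notin> F; aux_en c i; w \<in> bin (ls c i) \<rbrakk> \<Longrightarrow>
     step F t inp c \<lparr>net = net c \<union> bcast i (AUX w),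
       ls = (ls c)(i := (ls c i)\<lparr>aux := Some w\<rparr>)\<rparr>"
| Return: "\<lbrakk> i \<notin> F; ret_en t c i; ret_cond t c i S f \<rbrakk> \<Longrightarrow>
     step F t inp c \<lparr>net = net c,
       ls = (ls c)(i := (ls c i)\<lparr>view := Some (f ` S)\<rparr>)\<rparr>"
| Deliver: "\<lbrakk> i \<notin> F; (j, i, m) \<in> net c \<rbrakk> \<Longrightarrow>
     step F t inp c \<lparr>net = net c - {(j, i, m)},
       ls = (ls c)(i := (ls c i)\<lparr>rcvd := insert (j, m) (rcvd (ls c i))\<rparr>)\<rparr>"
| Inject: "j \<in> F \<Longrightarrow>
     step F t inp c \<lparr>net = insert (j, i, m) (net c), ls = ls c\<rparr>"
| Stutter: "step F t inp c c"

text \<open>Weak fairness: every action of a non-faulty process that stays enabled is eventually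
 taken (equivalently, it is disabled infinitely often), and every message between
 non-faulty processes is eventually delivered.\<close>
definition inf_disabled :: "(nat \<Rightarrow> ('p, 'v) cfg) \<Rightarrow> (('p, 'v) cfg \<Rightarrow> bool) \<Rightarrow> bool" where
  "inf_disabled \<sigma> P = (\<forall>k. \<exists>k'\<ge>k. \<not> P (\<sigma> k'))"

definition fair :: "'p set \<Rightarrow> nat \<Rightarrow> (nat \<Rightarrow> ('p::finite, 'v) cfg) \<Rightarrow> bool" where
  "fair F t \<sigma> = (\<forall>i. i \<notin> F \<longrightarrow>
      inf_disabled \<sigma> (\<lambda>c. start_en c i) \<and>
      (\<forall>x. inf_disabled \<sigma> (\<lambda>c. echo_en t c i x)) \<and>
      (\<forall>x. inf_disabled \<sigma> (\<lambda>c. bin_en t c i x)) \<and>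
      inf_disabled \<sigma> (\<lambda>c. aux_en c i) \<and>
      inf_disabled \<sigma> (\<lambda>c. ret_en t c i) \<and>
      (\<forall>j m. j \<notin> F \<longrightarrow> inf_disabled \<sigma> (\<lambda>c. (j, i, m) \<in> net c)))"

definition execution :: "'p set \<Rightarrow> nat \<Rightarrow> ('p \<Rightarrow> 'v) \<Rightarrow> (nat \<Rightarrow> ('p::finite, 'v) cfg) \<Rightarrow> bool" where
  "execution F t inp \<sigma> = (\<sigma> 0 = init_cfg \<and> (\<forall>k. step F t inp (\<sigma> k) (\<sigma> (Suc k))) \<and> fair F t \<sigma>)"

end

theory Submission imports Defs begin

fun sent :: "('p, 'v) cfg \<Rightarrow> 'p \<Rightarrow> 'v msg \<Rightarrow> bool" where
  "sent c j (BVAL x) = (x \<in> bvsent (ls c j))"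
| "sent c j (AUX w) = (aux (ls c j) = Some w)"

lemma step_mono:
  assumes "step F t inp c c'"
  shows "rcvd (ls c p) \<subseteq> rcvd (ls c' p) \<and> bin (ls c p) \<subseteq> bin (ls c' p)
    \<and> bvsent (ls c p) \<subseteq> bvsent (ls c' p) \<and> (started (ls c p) \<longrightarrow> started (ls c' p))
    \<and> (aux (ls c p) \<noteq> None \<longrightarrow> aux (ls c' p) = aux (ls c p))
    \<and> (view (ls c p) \<noteq> None \<longrightarrow> view (ls c' p) = view (ls c p))"
  using assms by cases (auto simp: aux_en_def ret_en_def)

lemma sent_mono: "step F t inp c c' \<Longrightarrow> sent c j m \<Longrightarrow> sent c' j m"
  by (cases m) (use step_mono[of F t inp c c' j] in auto)

lemma nbval_mono: "rcvd s \<subseteq> rcvd s' \<Longrightarrow> nbval s x \<le> nbval (s'::('p::finite,'v) lst) x"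
  unfolding nbval_def by (rule card_mono) auto

lemma ret_cond_mono: "step F t inp c c' \<Longrightarrow> ret_cond t c i S f \<Longrightarrow> ret_cond t c' i S f"
  unfolding ret_cond_def using step_mono[of F t inp c c' i] by blast

lemma sent_new: assumes "step F t inp c c'" "sent c' j m" shows "sent c j m \<or> (j, i, m) \<in> net c'"
  using assms(1)
proof cases
  case (Start p) then show ?thesis using assms(2) by (cases m) (auto simp: bcast_def split: if_splits)
next
  case (Echo p x) then show ?thesis using assms(2) by (cases m) (auto simp: bcast_def split: if_splits)
next
  case (SendAux p w) then show ?thesis using assms(2) by (cases m) (auto simp: bcast_def split: if_splits)
next
  case (AddBin p x) then show ?thesis using assms(2) by (cases m) (auto split: if_splits)
next
  case (Return p S f) then show ?thesis using assms(2) by (cases m) (auto split: if_splits)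
next
  case (Deliver p q m') then show ?thesis using assms(2) by (cases m) (auto split: if_splits)
next
  case (Inject p q m') then show ?thesis using assms(2) by (cases m) auto
qed (use assms(2) in auto)

lemma net_keep: assumes "step F t inp c c'" "(j, i, m) \<in> net c"
  shows "(j, i, m) \<in> net c' \<or> (j, m) \<in> rcvd (ls c' i)"
  using assms(1)
proof cases
  case (Deliver p q m') then show ?thesis using assms(2) by auto
qed (use assms(2) in auto)

definition Inv :: "'p set \<Rightarrow> nat \<Rightarrow> ('p \<Rightarrow> 'v) \<Rightarrow> ('p::finite, 'v) cfg \<Rightarrow> bool" where
"Inv F t inp c = (
 (\<forall>j i m. j \<notin> F \<longrightarrow> (j, i, m) \<in> net c \<longrightarrow> sent c j m) \<and>
 (\<forall>i j m. i \<notin> F \<longrightarrow> j \<notin> F \<longrightarrow> (j, m) \<in> rcvd (ls c i) \<longrightarrow> sent c j m) \<and>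
 (\<forall>j x. j \<notin> F \<longrightarrow> x \<in> bvsent (ls c j) \<longrightarrow> (\<exists>j'. j' \<notin> F \<and> inp j' = x)) \<and>
 (\<forall>i x. i \<notin> F \<longrightarrow> x \<in> bin (ls c i) \<longrightarrow> 2 * t + 1 \<le> nbval (ls c i) x) \<and>
 (\<forall>i w. i \<notin> F \<longrightarrow> aux (ls c i) = Some w \<longrightarrow> w \<in> bin (ls c i)) \<and>
 (\<forall>i V. i \<notin> F \<longrightarrow> view (ls c i) = Some V \<longrightarrow> (\<exists>S f. ret_cond t c i S f \<and> V = f ` S)) \<and>
 (\<forall>i. i \<notin> F \<longrightarrow> started (ls c i) \<longrightarrow> inp i \<in> bvsent (ls c i)) \<and>
 (\<forall>i j m. i \<notin> F \<longrightarrow> j \<notin> F \<longrightarrow> sent c j m \<longrightarrow> (j, i, m) \<in> net c \<or> (j, m) \<in> rcvd (ls c i)))"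

lemma Inv_init: "Inv F t inp init_cfg"
  unfolding Inv_def init_cfg_def init_lst_def
  by (auto elim: sent.elims)

lemma card_gt_notsub:
  assumes "card (F::'p::finite set) \<le> t" "t < card R"
  shows "\<exists>j\<in>R. j \<notin> F"
proof (rule ccontr)
  assume "\<not> ?thesis" then have "R \<subseteq> F" by auto
  then have "card R \<le> card F" by (rule card_mono[OF finite])
  with assms show False by simp
qed

lemma Inv_step:
  assumes st: "step F t inp c c'" and I: "Inv F t inp c" and cF: "card F \<le> t"
  shows "Inv F t inp c'"
proof -
  note sm = sent_mono[OF st]
  note Iu = I[unfolded Inv_def]
  note J1 = Iu[THEN conjunct1]
  note J2 = Iu[THEN conjunct2, THEN conjunct1]
  note J3 = Iu[THEN conjunct2, THEN conjunct2, THEN conjunct1]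
  note J4 = Iu[THEN conjunct2, THEN conjunct2, THEN conjunct2, THEN conjunct1]
  note J5 = Iu[THEN conjunct2, THEN conjunct2, THEN conjunct2, THEN conjunct2, THEN conjunct1]
  note J6 = Iu[THEN conjunct2, THEN conjunct2, THEN conjunct2, THEN conjunct2, THEN conjunct2, THEN conjunct1]
  note J7 = Iu[THEN conjunct2, THEN conjunct2, THEN conjunct2, THEN conjunct2, THEN conjunct2, THEN conjunct2, THEN conjunct1]
  note J8 = Iu[THEN conjunct2, THEN conjunct2, THEN conjunct2, THEN conjunct2, THEN conjunct2, THEN conjunct2, THEN conjunct2]
  note mo = step_mono[OF st]
  have I1: "\<forall>j i m. j \<notin> F \<longrightarrow> (j, i, m) \<in> net c' \<longrightarrow> sent c' j m"
    using st J1 J2 sm by cases (auto simp: bcast_def)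
  have I2: "\<forall>i j m. i \<notin> F \<longrightarrow> j \<notin> F \<longrightarrow> (j, m) \<in> rcvd (ls c' i) \<longrightarrow> sent c' j m"
    using st J1 J2 sm by cases auto
  have I3: "\<forall>j x. j \<notin> F \<longrightarrow> x \<in> bvsent (ls c' j) \<longrightarrow> (\<exists>j'. j' \<notin> F \<and> inp j' = x)"
    using st
  proof cases
    case (Echo i x)
    then have "t < card {j. (j, BVAL x) \<in> rcvd (ls c i)}" by (simp add: echo_en_def nbval_def)
    from card_gt_notsub[OF cF this] obtain j where "j \<notin> F" "(j, BVAL x) \<in> rcvd (ls c i)" by auto
    with J2 J3 Echo have "\<exists>j'. j' \<notin> F \<and> inp j' = x" by fastforce
    with Echo J3 show ?thesis by auto
  qed (use J3 in auto)
  have I4: "\<forall>i x. i \<notin> F \<longrightarrow> x \<in> bin (ls c' i) \<longrightarrow> 2 * t + 1 \<le> nbval (ls c' i) x"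
  proof (intro allI impI)
    fix i x assume a: "i \<notin> F" "x \<in> bin (ls c' i)"
    from st a J4 have "2 * t + 1 \<le> nbval (ls c i) x"
      by cases (auto simp: bin_en_def split: if_splits)
    also have "\<dots> \<le> nbval (ls c' i) x" using mo[of i] by (intro nbval_mono) blast
    finally show "2 * t + 1 \<le> nbval (ls c' i) x" .
  qed
  have I5: "\<forall>i w. i \<notin> F \<longrightarrow> aux (ls c' i) = Some w \<longrightarrow> w \<in> bin (ls c' i)"
    using st J5 by cases (auto simp: aux_en_def)
  have I6: "\<forall>i V. i \<notin> F \<longrightarrow> view (ls c' i) = Some V \<longrightarrow> (\<exists>S f. ret_cond t c' i S f \<and> V = f ` S)"
  proof (intro allI impI)
    fix i V assume a: "i \<notin> F" "view (ls c' i) = Some V"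
    from st a J6 have "\<exists>S f. ret_cond t c i S f \<and> V = f ` S"
      by cases (auto simp: ret_en_def split: if_splits)
    then show "\<exists>S f. ret_cond t c' i S f \<and> V = f ` S" using ret_cond_mono[OF st] by blast
  qed
  have I7: "\<forall>i. i \<notin> F \<longrightarrow> started (ls c' i) \<longrightarrow> inp i \<in> bvsent (ls c' i)"
    using st J7 by cases auto
  have I8: "\<forall>i j m. i \<notin> F \<longrightarrow> j \<notin> F \<longrightarrow> sent c' j m \<longrightarrow> (j, i, m) \<in> net c' \<or> (j, m) \<in> rcvd (ls c' i)"
    using J8 sent_new[OF st] net_keep[OF st] mo by blast
  show ?thesis unfolding Inv_def using I1 I2 I3 I4 I5 I6 I7 I8 by blast
qed


lemma ev_all:
  assumes "finite A" "\<And>j. j \<in> A \<Longrightarrow> \<exists>k::nat. P j k" "\<And>j k k'. P j k \<Longrightarrow> k \<le> k' \<Longrightarrow> P j k'"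
  shows "\<exists>K. \<forall>j\<in>A. P j K"
  using assms(1,2)
proof (induction A rule: finite_induct)
  case empty then show ?case by auto
next
  case (insert a A)
  then obtain K where K: "\<forall>j\<in>A. P j K" by auto
  obtain k where k: "P a k" using insert by auto
  have "\<forall>j\<in>insert a A. P j (max K k)" using K k assms(3) by (auto intro: max.cobounded1 max.cobounded2)
  then show ?case by blast
qed

lemma card_sub_nbval: "A \<subseteq> {j. (j, BVAL x) \<in> rcvd s} \<Longrightarrow> card A \<le> nbval (s::('p::finite,'v) lst) x"
  unfolding nbval_def by (rule card_mono) auto

locale sbv =
  fixes F :: "'p::finite set" and t :: nat and inp :: "'p \<Rightarrow> 'v" and \<sigma> :: "nat \<Rightarrow> ('p, 'v) cfg"
  assumes nt: "3 * t < card (UNIV :: 'p set)" and cF: "card F \<le> t"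
    and c2: "card (inp ` (- F)) \<le> 2" and ex: "execution F t inp \<sigma>"
begin

lemma stp: "step F t inp (\<sigma> k) (\<sigma> (Suc k))" using ex by (simp add: execution_def)
lemma fr: "fair F t \<sigma>" using ex by (simp add: execution_def)

lemma inv: "Inv F t inp (\<sigma> k)"
proof (induction k)
  case 0 then show ?case using ex Inv_init by (simp add: execution_def)
next
  case (Suc k) then show ?case using Inv_step[OF stp _ cF] by blast
qed

lemma I2: "i \<notin> F \<Longrightarrow> j \<notin> F \<Longrightarrow> (j, m) \<in> rcvd (ls (\<sigma> k) i) \<Longrightarrow> sent (\<sigma> k) j m"
  using inv[of k, unfolded Inv_def, THEN conjunct2, THEN conjunct1] by blast
lemma I3: "j \<notin> F \<Longrightarrow> x \<in> bvsent (ls (\<sigma> k) j) \<Longrightarrow> \<exists>j'. j' \<notin> F \<and> inp j' = x"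
  using inv[of k, unfolded Inv_def, THEN conjunct2, THEN conjunct2, THEN conjunct1] by blast
lemma I4: "i \<notin> F \<Longrightarrow> x \<in> bin (ls (\<sigma> k) i) \<Longrightarrow> 2 * t + 1 \<le> nbval (ls (\<sigma> k) i) x"
  using inv[of k, unfolded Inv_def, THEN conjunct2, THEN conjunct2, THEN conjunct2, THEN conjunct1] by blast
lemma I5: "i \<notin> F \<Longrightarrow> aux (ls (\<sigma> k) i) = Some w \<Longrightarrow> w \<in> bin (ls (\<sigma> k) i)"
  using inv[of k, unfolded Inv_def, THEN conjunct2, THEN conjunct2, THEN conjunct2, THEN conjunct2, THEN conjunct1] by blast
lemma I6: "i \<notin> F \<Longrightarrow> view (ls (\<sigma> k) i) = Some V \<Longrightarrow> \<exists>S f. ret_cond t (\<sigma> k) i S f \<and> V = f ` S"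
  using inv[of k, unfolded Inv_def, THEN conjunct2, THEN conjunct2, THEN conjunct2, THEN conjunct2, THEN conjunct2, THEN conjunct1] by blast
lemma I7: "i \<notin> F \<Longrightarrow> started (ls (\<sigma> k) i) \<Longrightarrow> inp i \<in> bvsent (ls (\<sigma> k) i)"
  using inv[of k, unfolded Inv_def, THEN conjunct2, THEN conjunct2, THEN conjunct2, THEN conjunct2, THEN conjunct2, THEN conjunct2, THEN conjunct1] by blast
lemma I8: "i \<notin> F \<Longrightarrow> j \<notin> F \<Longrightarrow> sent (\<sigma> k) j m \<Longrightarrow> (j, i, m) \<in> net (\<sigma> k) \<or> (j, m) \<in> rcvd (ls (\<sigma> k) i)"
  using inv[of k, unfolded Inv_def, THEN conjunct2, THEN conjunct2, THEN conjunct2, THEN conjunct2, THEN conjunct2, THEN conjunct2, THEN conjunct2] by blast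

lemma mono_le:
  assumes "k \<le> k'"
  shows "rcvd (ls (\<sigma> k) p) \<subseteq> rcvd (ls (\<sigma> k') p) \<and> bin (ls (\<sigma> k) p) \<subseteq> bin (ls (\<sigma> k') p)
    \<and> bvsent (ls (\<sigma> k) p) \<subseteq> bvsent (ls (\<sigma> k') p) \<and> (started (ls (\<sigma> k) p) \<longrightarrow> started (ls (\<sigma> k') p))
    \<and> (aux (ls (\<sigma> k) p) \<noteq> None \<longrightarrow> aux (ls (\<sigma> k') p) = aux (ls (\<sigma> k) p))
    \<and> (view (ls (\<sigma> k) p) \<noteq> None \<longrightarrow> view (ls (\<sigma> k') p) = view (ls (\<sigma> k) p))"
  using assms
proof (induction k' rule: dec_induct)
  case base then show ?case by simp
next
  case (step n)
  have "rcvd (ls (\<sigma> n) p) \<subseteq> rcvd (ls (\<sigma> (Suc n)) p) \<and> bin (ls (\<sigma> n) p) \<subseteq> bin (ls (\<sigma> (Suc n)) p)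
    \<and> bvsent (ls (\<sigma> n) p) \<subseteq> bvsent (ls (\<sigma> (Suc n)) p) \<and> (started (ls (\<sigma> n) p) \<longrightarrow> started (ls (\<sigma> (Suc n)) p))
    \<and> (aux (ls (\<sigma> n) p) \<noteq> None \<longrightarrow> aux (ls (\<sigma> (Suc n)) p) = aux (ls (\<sigma> n) p))
    \<and> (view (ls (\<sigma> n) p) \<noteq> None \<longrightarrow> view (ls (\<sigma> (Suc n)) p) = view (ls (\<sigma> n) p))"
    by (rule step_mono[OF stp])
  with step.IH show ?case by auto
qed

lemma rcvd_mono: "k \<le> k' \<Longrightarrow> y \<in> rcvd (ls (\<sigma> k) p) \<Longrightarrow> y \<in> rcvd (ls (\<sigma> k') p)"
  using mono_le by blast
lemma bin_mono: "k \<le> k' \<Longrightarrow> y \<in> bin (ls (\<sigma> k) p) \<Longrightarrow> y \<in> bin (ls (\<sigma> k') p)"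
  using mono_le by blast
lemma bvsent_mono: "k \<le> k' \<Longrightarrow> y \<in> bvsent (ls (\<sigma> k) p) \<Longrightarrow> y \<in> bvsent (ls (\<sigma> k') p)"
  using mono_le by blast
lemma started_mono: "k \<le> k' \<Longrightarrow> started (ls (\<sigma> k) p) \<Longrightarrow> started (ls (\<sigma> k') p)"
  using mono_le by blast
lemma aux_mono: "k \<le> k' \<Longrightarrow> aux (ls (\<sigma> k) p) = Some w \<Longrightarrow> aux (ls (\<sigma> k') p) = Some w"
  using mono_le[of k k' p] by auto
lemma view_mono: "k \<le> k' \<Longrightarrow> view (ls (\<sigma> k) p) = Some w \<Longrightarrow> view (ls (\<sigma> k') p) = Some w"
  using mono_le[of k k' p] by auto

lemma fair_ev:
  assumes "inf_disabled \<sigma> E" "\<And>k'. k \<le> k' \<Longrightarrow> E (\<sigma> k') \<or> Q (\<sigma> k')"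
  shows "\<exists>k'. Q (\<sigma> k')"
  using assms unfolding inf_disabled_def by blast

lemma deliver:
  assumes "j \<notin> F" "i \<notin> F" "(j, i, m) \<in> net (\<sigma> k)"
  shows "\<exists>k'. (j, m) \<in> rcvd (ls (\<sigma> k') i)"
proof -
  have d: "(j, i, m) \<in> net (\<sigma> (k + d)) \<or> (j, m) \<in> rcvd (ls (\<sigma> (k + d)) i)" for d
  proof (induction d)
    case 0 then show ?case using assms by simp
  next
    case (Suc d)
    then show ?case using net_keep[OF stp[of "k + d"]] rcvd_mono[of "k + d" "Suc (k + d)"] by auto
  qed
  have "inf_disabled \<sigma> (\<lambda>c. (j, i, m) \<in> net c)" using fr assms unfolding fair_def by blast
  then show ?thesis
  proof (rule fair_ev[where k = k])
    fix k' assume "k \<le> k'"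
    then show "(j, i, m) \<in> net (\<sigma> k') \<or> (j, m) \<in> rcvd (ls (\<sigma> k') i)"
      using d[of "k' - k"] by simp
  qed
qed

lemma sent_rcv:
  assumes "j \<notin> F" "i \<notin> F" "sent (\<sigma> k) j m"
  shows "\<exists>k'. (j, m) \<in> rcvd (ls (\<sigma> k') i)"
  using I8[OF assms(2,1,3)] deliver[OF assms(1,2)] by blast

lemma started_ev: "i \<notin> F \<Longrightarrow> \<exists>k. started (ls (\<sigma> k) i)"
  apply (rule fair_ev[where k = 0 and E = "\<lambda>c. start_en c i"])
  using fr unfolding fair_def start_en_def by auto

lemma nF: "2 * t + 1 \<le> card (- F)"
proof -
  have "card (- F) = card (UNIV :: 'p set) - card F" by (simp add: Compl_eq_Diff_UNIV card_Diff_subset)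
  then show ?thesis using nt cF by linarith
qed

lemma amplify:
  assumes "A \<subseteq> - F" "t + 1 \<le> card A" "\<forall>j\<in>A. \<exists>k. x \<in> bvsent (ls (\<sigma> k) j)" "i \<notin> F"
  shows "\<exists>k. x \<in> bvsent (ls (\<sigma> k) i)"
proof -
  have "\<forall>j\<in>A. \<exists>k. (j, BVAL x) \<in> rcvd (ls (\<sigma> k) i)"
  proof
    fix j assume j: "j \<in> A"
    then have jF: "j \<notin> F" using assms(1) by blast
    obtain k where "x \<in> bvsent (ls (\<sigma> k) j)" using assms(3) j by blast
    then have "sent (\<sigma> k) j (BVAL x)" by simp
    then show "\<exists>k. (j, BVAL x) \<in> rcvd (ls (\<sigma> k) i)" by (rule sent_rcv[OF jF assms(4)])
  qed
  then have "\<exists>K. \<forall>j\<in>A. (j, BVAL x) \<in> rcvd (ls (\<sigma> K) i)"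
    by (intro ev_all[OF finite]) (auto intro: rcvd_mono)
  then obtain K1 where K1: "\<forall>j\<in>A. (j, BVAL x) \<in> rcvd (ls (\<sigma> K1) i)" by blast
  obtain K2 where K2: "started (ls (\<sigma> K2) i)" using started_ev assms(4) by blast
  have "inf_disabled \<sigma> (\<lambda>c. echo_en t c i x)" using fr assms(4) unfolding fair_def by blast
  then show ?thesis
  proof (rule fair_ev[where k = "max K1 K2"])
    fix k' assume k': "max K1 K2 \<le> k'"
    have "A \<subseteq> {j. (j, BVAL x) \<in> rcvd (ls (\<sigma> k') i)}" using K1 rcvd_mono[of K1 k' _ i] k' by auto
    then have "t + 1 \<le> nbval (ls (\<sigma> k') i) x" by (rule order_trans[OF assms(2) card_sub_nbval])
    moreover have "started (ls (\<sigma> k') i)" using K2 k' started_mono[of K2 k' i] by simp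
    ultimately show "echo_en t (\<sigma> k') i x \<or> x \<in> bvsent (ls (\<sigma> k') i)"
      unfolding echo_en_def by blast
  qed
qed

lemma allbin:
  assumes "\<forall>j. j \<notin> F \<longrightarrow> (\<exists>k. x \<in> bvsent (ls (\<sigma> k) j))" "i \<notin> F"
  shows "\<exists>k. x \<in> bin (ls (\<sigma> k) i)"
proof -
  have "\<forall>j\<in>-F. \<exists>k. (j, BVAL x) \<in> rcvd (ls (\<sigma> k) i)"
  proof
    fix j assume j: "j \<in> -F"
    then have jF: "j \<notin> F" by blast
    obtain k where "x \<in> bvsent (ls (\<sigma> k) j)" using assms(1) jF by blast
    then have "sent (\<sigma> k) j (BVAL x)" by simp
    then show "\<exists>k. (j, BVAL x) \<in> rcvd (ls (\<sigma> k) i)" by (rule sent_rcv[OF jF assms(2)])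
  qed
  then have "\<exists>K. \<forall>j\<in>-F. (j, BVAL x) \<in> rcvd (ls (\<sigma> K) i)"
    by (intro ev_all[OF finite]) (auto intro: rcvd_mono)
  then obtain K1 where K1: "\<forall>j\<in>-F. (j, BVAL x) \<in> rcvd (ls (\<sigma> K1) i)" by blast
  obtain K2 where K2: "started (ls (\<sigma> K2) i)" using started_ev assms(2) by blast
  have "inf_disabled \<sigma> (\<lambda>c. bin_en t c i x)" using fr assms(2) unfolding fair_def by blast
  then show ?thesis
  proof (rule fair_ev[where k = "max K1 K2"])
    fix k' assume k': "max K1 K2 \<le> k'"
    have "-F \<subseteq> {j. (j, BVAL x) \<in> rcvd (ls (\<sigma> k') i)}" using K1 rcvd_mono[of K1 k' _ i] k' by auto
    then have "2 * t + 1 \<le> nbval (ls (\<sigma> k') i) x" by (rule order_trans[OF nF card_sub_nbval])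
    moreover have "started (ls (\<sigma> k') i)" using K2 k' started_mono[of K2 k' i] by simp
    ultimately show "bin_en t (\<sigma> k') i x \<or> x \<in> bin (ls (\<sigma> k') i)"
      unfolding bin_en_def by blast
  qed
qed

lemma tplus:
  assumes "A \<subseteq> - F" "t + 1 \<le> card A" "\<forall>j\<in>A. \<exists>k. x \<in> bvsent (ls (\<sigma> k) j)" "i \<notin> F"
  shows "\<exists>k. x \<in> bin (ls (\<sigma> k) i)"
proof -
  have "\<forall>j. j \<notin> F \<longrightarrow> (\<exists>k. x \<in> bvsent (ls (\<sigma> k) j))" using amplify[OF assms(1-3)] by blast
  then show ?thesis by (rule allbin[OF _ assms(4)])
qed


lemma R_nonfaulty:
  assumes "i \<notin> F" "x \<in> bin (ls (\<sigma> k) i)"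
  shows "t + 1 \<le> card ({p. (p, BVAL x) \<in> rcvd (ls (\<sigma> k) i)} - F)"
proof -
  let ?R = "{p. (p, BVAL x) \<in> rcvd (ls (\<sigma> k) i)}"
  have a: "2 * t + 1 \<le> card ?R" using I4[OF assms] unfolding nbval_def .
  have "card ?R \<le> card ((?R - F) \<union> F)" by (rule card_mono) auto
  also have "\<dots> \<le> card (?R - F) + card F" by (rule card_Un_le)
  finally show ?thesis using a cF by linarith
qed

lemma R_sent:
  assumes "i \<notin> F" "p \<in> {p. (p, BVAL x) \<in> rcvd (ls (\<sigma> k) i)} - F"
  shows "x \<in> bvsent (ls (\<sigma> k) p)"
proof -
  have "p \<notin> F" "(p, BVAL x) \<in> rcvd (ls (\<sigma> k) i)" using assms(2) by auto
  from I2[OF assms(1) this] show ?thesis by simp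
qed

lemma binb:
  assumes "i \<notin> F" "j \<notin> F" "x \<in> bin (ls (\<sigma> k) i)"
  shows "\<exists>k'. x \<in> bin (ls (\<sigma> k') j)"
proof (rule tplus)
  show "{p. (p, BVAL x) \<in> rcvd (ls (\<sigma> k) i)} - F \<subseteq> - F" by blast
  show "t + 1 \<le> card ({p. (p, BVAL x) \<in> rcvd (ls (\<sigma> k) i)} - F)" by (rule R_nonfaulty[OF assms(1,3)])
  show "\<forall>p\<in>{p. (p, BVAL x) \<in> rcvd (ls (\<sigma> k) i)} - F. \<exists>k. x \<in> bvsent (ls (\<sigma> k) p)"
    using R_sent[OF assms(1)] by blast
  show "j \<notin> F" by fact
qed

lemma bina:
  assumes "i \<notin> F" "x \<in> bin (ls (\<sigma> k) i)"
  shows "\<exists>j. j \<notin> F \<and> inp j = x"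
proof -
  have "t + 1 \<le> card ({p. (p, BVAL x) \<in> rcvd (ls (\<sigma> k) i)} - F)" by (rule R_nonfaulty[OF assms])
  then have "card ({p. (p, BVAL x) \<in> rcvd (ls (\<sigma> k) i)} - F) \<noteq> 0" by linarith
  then have "{p. (p, BVAL x) \<in> rcvd (ls (\<sigma> k) i)} - F \<noteq> {}" by (metis card.empty)
  then obtain p where p: "p \<in> {p. (p, BVAL x) \<in> rcvd (ls (\<sigma> k) i)} - F" by blast
  then have "p \<notin> F" by blast
  from I3[OF this R_sent[OF assms(1) p]] show ?thesis .
qed

lemma inp_ev: "i \<notin> F \<Longrightarrow> \<exists>k. inp i \<in> bvsent (ls (\<sigma> k) i)"
  using started_ev I7 by blast

lemma big_class: "\<exists>v. t + 1 \<le> card {j. j \<notin> F \<and> inp j = v}"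
proof (rule ccontr)
  assume "\<not> ?thesis"
  then have le: "\<And>v. card {j. j \<notin> F \<and> inp j = v} \<le> t" using not_less_eq_eq by fastforce
  have "- F \<subseteq> (\<Union>v\<in>inp ` (- F). {j. j \<notin> F \<and> inp j = v})" by blast
  then have "card (- F) \<le> card (\<Union>v\<in>inp ` (- F). {j. j \<notin> F \<and> inp j = v})" by (rule card_mono[OF finite])
  also have "\<dots> \<le> (\<Sum>v\<in>inp ` (- F). card {j. j \<notin> F \<and> inp j = v})" by (rule card_UN_le) simp
  also have "\<dots> \<le> of_nat (card (inp ` (- F))) * t" by (rule sum_bounded_above) (rule le)
  also have "\<dots> \<le> 2 * t" using c2 by simp
  finally show False using nF by linarith
qed

lemma binc: "i \<notin> F \<Longrightarrow> \<exists>k. bin (ls (\<sigma> k) i) \<noteq> {}"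
proof -
  assume iF: "i \<notin> F"
  obtain v where v: "t + 1 \<le> card {j. j \<notin> F \<and> inp j = v}" using big_class by blast
  have "\<exists>k. v \<in> bin (ls (\<sigma> k) i)"
  proof (rule tplus[OF _ v])
    show "{j. j \<notin> F \<and> inp j = v} \<subseteq> - F" by blast
    show "\<forall>j\<in>{j. j \<notin> F \<and> inp j = v}. \<exists>k. v \<in> bvsent (ls (\<sigma> k) j)" using inp_ev by blast
  qed (rule iF)
  then show ?thesis by blast
qed

lemma bind:
  assumes "\<forall>j. j \<notin> F \<longrightarrow> inp j = v" "i \<notin> F"
  shows "\<exists>k. v \<in> bin (ls (\<sigma> k) i)"
proof (rule tplus[of "- F"])
  show "- F \<subseteq> - F" by simp
  show "t + 1 \<le> card (- F)" using nF by simp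
  show "\<forall>j\<in>- F. \<exists>k. v \<in> bvsent (ls (\<sigma> k) j)" using inp_ev assms(1) by (metis ComplD)
qed (rule assms(2))

lemma aux_ev: "i \<notin> F \<Longrightarrow> \<exists>k w. aux (ls (\<sigma> k) i) = Some w"
proof -
  assume iF: "i \<notin> F"
  obtain K1 where K1: "bin (ls (\<sigma> K1) i) \<noteq> {}" using binc[OF iF] by blast
  obtain K2 where K2: "started (ls (\<sigma> K2) i)" using started_ev[OF iF] by blast
  have "inf_disabled \<sigma> (\<lambda>c. aux_en c i)" using fr iF unfolding fair_def by blast
  then have "\<exists>k. aux (ls (\<sigma> k) i) \<noteq> None"
  proof (rule fair_ev[where k = "max K1 K2"])
    fix k' assume k': "max K1 K2 \<le> k'"
    have "bin (ls (\<sigma> k') i) \<noteq> {}" using K1 k' bin_mono[of K1 k' _ i] by auto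
    moreover have "started (ls (\<sigma> k') i)" using K2 k' started_mono[of K2 k' i] by simp
    ultimately show "aux_en (\<sigma> k') i \<or> aux (ls (\<sigma> k') i) \<noteq> None"
      unfolding aux_en_def by blast
  qed
  then show ?thesis by blast
qed

lemma ret_cond_le: "k \<le> k' \<Longrightarrow> ret_cond t (\<sigma> k) i S f \<Longrightarrow> ret_cond t (\<sigma> k') i S f"
  unfolding ret_cond_def using rcvd_mono[of k k' _ i] bin_mono[of k k' _ i] by blast

lemma sbv_term: "i \<notin> F \<Longrightarrow> \<exists>k. view (ls (\<sigma> k) i) \<noteq> None"
proof -
  assume iF: "i \<notin> F"
  let ?P = "\<lambda>j K. \<exists>w. aux (ls (\<sigma> K) j) = Some w \<and> (j, AUX w) \<in> rcvd (ls (\<sigma> K) i) \<and> w \<in> bin (ls (\<sigma> K) i)"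
  have ex: "\<exists>K. ?P j K" if jF: "j \<in> - F" for j
  proof -
    from jF have jF': "j \<notin> F" by simp
    obtain k w where kw: "aux (ls (\<sigma> k) j) = Some w" using aux_ev[OF jF'] by blast
    have wb: "w \<in> bin (ls (\<sigma> k) j)" by (rule I5[OF jF' kw])
    have "sent (\<sigma> k) j (AUX w)" using kw by simp
    then obtain k1 where k1: "(j, AUX w) \<in> rcvd (ls (\<sigma> k1) i)" using sent_rcv[OF jF' iF] by blast
    obtain k2 where k2: "w \<in> bin (ls (\<sigma> k2) i)" using binb[OF jF' iF wb] by blast
    let ?K = "max k (max k1 k2)"
    have "aux (ls (\<sigma> ?K) j) = Some w" using aux_mono[OF _ kw, of ?K] by simp
    moreover have "(j, AUX w) \<in> rcvd (ls (\<sigma> ?K) i)" using rcvd_mono[OF _ k1, of ?K] by simp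
    moreover have "w \<in> bin (ls (\<sigma> ?K) i)" using bin_mono[OF _ k2, of ?K] by simp
    ultimately show ?thesis by blast
  qed
  have mono: "?P j K'" if "?P j K" "K \<le> K'" for j K K'
    using that aux_mono[of K K' j] rcvd_mono[of K K' _ i] bin_mono[of K K' _ i] by blast
  obtain K1 where K1: "\<forall>j\<in>-F. ?P j K1" using ev_all[OF finite, of "-F" ?P] ex mono by blast
  obtain K2 where K2: "started (ls (\<sigma> K2) i)" using started_ev[OF iF] by blast
  define K where "K = max K1 K2"
  have PK: "\<forall>j\<in>-F. ?P j K" using K1 mono unfolding K_def by (meson max.cobounded1)
  have "card (UNIV :: 'p set) - t \<le> card (- F)"
  proof -
    have "card (- F) = card (UNIV :: 'p set) - card F" by (simp add: Compl_eq_Diff_UNIV card_Diff_subset)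
    then show ?thesis using cF by linarith
  qed
  then obtain S where S: "S \<subseteq> - F" "card S = card (UNIV :: 'p set) - t"
    by (meson obtain_subset_with_card_n)
  define f where "f j = the (aux (ls (\<sigma> K) j))" for j
  have rc: "ret_cond t (\<sigma> K) i S f"
    unfolding ret_cond_def
  proof (intro conjI ballI)
    show "card S = card (UNIV :: 'p set) - t" by (rule S(2))
  next
    fix j assume "j \<in> S"
    then have "?P j K" using PK S(1) by blast
    then show "(j, AUX (f j)) \<in> rcvd (ls (\<sigma> K) i)" "f j \<in> bin (ls (\<sigma> K) i)"
      unfolding f_def by auto
  qed
  have auxi: "aux (ls (\<sigma> K) i) \<noteq> None" using PK iF by auto
  have "inf_disabled \<sigma> (\<lambda>c. ret_en t c i)" using fr iF unfolding fair_def by blast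
  then show ?thesis
  proof (rule fair_ev[where k = K])
    fix k' assume k': "K \<le> k'"
    have "ret_cond t (\<sigma> k') i S f" by (rule ret_cond_le[OF k' rc])
    moreover have "started (ls (\<sigma> k') i)" using K2 k' started_mono[of K2 k' i] unfolding K_def by simp
    moreover have "aux (ls (\<sigma> k') i) \<noteq> None" using auxi mono_le[OF k', of i] by auto
    ultimately show "ret_en t (\<sigma> k') i \<or> view (ls (\<sigma> k') i) \<noteq> None"
      unfolding ret_en_def by blast
  qed
qed

lemma bine:
  assumes "i \<notin> F" "j \<notin> F" "view (ls (\<sigma> k) j) = Some V"
  shows "\<exists>k'. V \<subseteq> bin (ls (\<sigma> k') i)"
proof -
  obtain S f where rc: "ret_cond t (\<sigma> k) j S f" and V: "V = f ` S" using I6[OF assms(2,3)] by blast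
  have Vb: "V \<subseteq> bin (ls (\<sigma> k) j)" using rc V unfolding ret_cond_def by blast
  have "\<exists>K. \<forall>x\<in>V. x \<in> bin (ls (\<sigma> K) i)"
  proof (rule ev_all)
    show "finite V" unfolding V by simp
    show "\<exists>k'. x \<in> bin (ls (\<sigma> k') i)" if "x \<in> V" for x
      using binb[OF assms(2,1)] Vb that by blast
    show "x \<in> bin (ls (\<sigma> k'') i)" if "x \<in> bin (ls (\<sigma> k') i)" "k' \<le> k''" for x k' k''
      using bin_mono that by blast
  qed
  then show ?thesis by blast
qed

lemma view_props:
  assumes "i \<notin> F" "view (ls (\<sigma> k) i) = Some V"
  shows "V \<noteq> {}" "V \<subseteq> bin (ls (\<sigma> k) i)"
proof -
  obtain S f where rc: "ret_cond t (\<sigma> k) i S f" and V: "V = f ` S" using I6[OF assms] by blast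
  have "card S \<noteq> 0" using rc nt unfolding ret_cond_def by simp
  then have "S \<noteq> {}" by auto
  then show "V \<noteq> {}" using V by simp
  show "V \<subseteq> bin (ls (\<sigma> k) i)" using rc V unfolding ret_cond_def by blast
qed

lemma inclusion:
  assumes "i \<notin> F" "j \<notin> F" "view (ls (\<sigma> k) i) = Some {v}" "view (ls (\<sigma> k') j) = Some V"
  shows "v \<in> V"
proof -
  obtain S1 f1 where r1: "ret_cond t (\<sigma> k) i S1 f1" and V1: "{v} = f1 ` S1" using I6[OF assms(1,3)] by blast
  obtain S2 f2 where r2: "ret_cond t (\<sigma> k') j S2 f2" and V2: "V = f2 ` S2" using I6[OF assms(2,4)] by blast
  have c1: "card S1 = card (UNIV :: 'p set) - t" and c2: "card S2 = card (UNIV :: 'p set) - t"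
    using r1 r2 unfolding ret_cond_def by auto
  have "card S1 + card S2 = card (S1 \<union> S2) + card (S1 \<inter> S2)" by (rule card_Un_Int) auto
  moreover have "card (S1 \<union> S2) \<le> card (UNIV :: 'p set)" by (rule card_mono) auto
  ultimately have "t < card (S1 \<inter> S2)" using c1 c2 nt by linarith
  from card_gt_notsub[OF cF this] obtain m where m: "m \<in> S1" "m \<in> S2" "m \<notin> F" by blast
  have "(m, AUX (f1 m)) \<in> rcvd (ls (\<sigma> k) i)" using r1 m unfolding ret_cond_def by blast
  from I2[OF assms(1) m(3) this] have a1: "aux (ls (\<sigma> k) m) = Some (f1 m)" by simp
  have "(m, AUX (f2 m)) \<in> rcvd (ls (\<sigma> k') j)" using r2 m unfolding ret_cond_def by blast
  from I2[OF assms(2) m(3) this] have a2: "aux (ls (\<sigma> k') m) = Some (f2 m)" by simp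
  have "f1 m = f2 m"
  proof (cases "k \<le> k'")
    case True then show ?thesis using aux_mono[OF True a1] a2 by simp
  next
    case False then have "k' \<le> k" by simp
    then show ?thesis using aux_mono[OF _ a2, of k] a1 by simp
  qed
  moreover have "f1 m = v" using V1 m(1) by (metis imageI singletonD)
  ultimately show ?thesis using V2 m(2) by blast
qed

end

theorem lemma1:
  fixes F :: "'p::finite set" and t :: nat and inp :: "'p \<Rightarrow> 'v"
    and \<sigma> :: "nat \<Rightarrow> ('p, 'v) cfg"
  assumes "3 * t < card (UNIV :: 'p set)"
    and "card F \<le> t"
    and "card (inp ` (- F)) \<le> 2"
    and "execution F t inp \<sigma>"
  shows
    "(\<forall>i. i \<notin> F \<longrightarrow> (\<exists>k. view (ls (\<sigma> k) i) \<noteq> None))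
     \<and> (\<forall>i k V. i \<notin> F \<longrightarrow> view (ls (\<sigma> k) i) = Some V \<longrightarrow> V \<noteq> {})
     \<and> (\<forall>i k V v. i \<notin> F \<longrightarrow> view (ls (\<sigma> k) i) = Some V \<longrightarrow> v \<in> V \<longrightarrow>
          (\<exists>j. j \<notin> F \<and> inp j = v))
     \<and> (\<forall>i j k k' v V. i \<notin> F \<longrightarrow> j \<notin> F \<longrightarrow> view (ls (\<sigma> k) i) = Some {v} \<longrightarrow>
          view (ls (\<sigma> k') j) = Some V \<longrightarrow> v \<in> V)
     \<and> (\<forall>v. (\<forall>j. j \<notin> F \<longrightarrow> inp j = v) \<longrightarrow>
          (\<forall>i k V. i \<notin> F \<longrightarrow> view (ls (\<sigma> k) i) = Some V \<longrightarrow> V = {v}))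
     \<and> (\<forall>i j k k' v w. i \<notin> F \<longrightarrow> j \<notin> F \<longrightarrow> view (ls (\<sigma> k) i) = Some {v} \<longrightarrow>
          view (ls (\<sigma> k') j) = Some {w} \<longrightarrow> v = w)
     \<and> (\<forall>i k x. i \<notin> F \<longrightarrow> x \<in> bin (ls (\<sigma> k) i) \<longrightarrow> (\<exists>j. j \<notin> F \<and> inp j = x))
     \<and> (\<forall>i j k x. i \<notin> F \<longrightarrow> j \<notin> F \<longrightarrow> x \<in> bin (ls (\<sigma> k) i) \<longrightarrow>
          (\<exists>k'. x \<in> bin (ls (\<sigma> k') j)))
     \<and> (\<forall>i. i \<notin> F \<longrightarrow> (\<exists>k. bin (ls (\<sigma> k) i) \<noteq> {}))
     \<and> (\<forall>v. (\<forall>j. j \<notin> F \<longrightarrow> inp j = v) \<longrightarrow>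
          (\<forall>i. i \<notin> F \<longrightarrow> (\<exists>k. v \<in> bin (ls (\<sigma> k) i))))
     \<and> (\<forall>i j k V. i \<notin> F \<longrightarrow> j \<notin> F \<longrightarrow> view (ls (\<sigma> k) j) = Some V \<longrightarrow>
          (\<exists>k'. V \<subseteq> bin (ls (\<sigma> k') i)))"
proof -
  interpret sbv F t inp \<sigma> using assms by unfold_locales
  have P1: "\<forall>i. i \<notin> F \<longrightarrow> (\<exists>k. view (ls (\<sigma> k) i) \<noteq> None)" using sbv_term by blast
  have P2: "\<forall>i k V. i \<notin> F \<longrightarrow> view (ls (\<sigma> k) i) = Some V \<longrightarrow> V \<noteq> {}" using view_props(1) by blast
  have P3: "\<forall>i k V v. i \<notin> F \<longrightarrow> view (ls (\<sigma> k) i) = Some V \<longrightarrow> v \<in> V \<longrightarrow>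
          (\<exists>j. j \<notin> F \<and> inp j = v)"
  proof (intro allI impI)
    fix i k V v assume a: "i \<notin> F" "view (ls (\<sigma> k) i) = Some V" "v \<in> V"
    then have "v \<in> bin (ls (\<sigma> k) i)" using view_props(2)[OF a(1,2)] by blast
    then show "\<exists>j. j \<notin> F \<and> inp j = v" by (rule bina[OF a(1)])
  qed
  have P4: "\<forall>i j k k' v V. i \<notin> F \<longrightarrow> j \<notin> F \<longrightarrow> view (ls (\<sigma> k) i) = Some {v} \<longrightarrow>
          view (ls (\<sigma> k') j) = Some V \<longrightarrow> v \<in> V" using inclusion by blast
  have P5: "\<forall>v. (\<forall>j. j \<notin> F \<longrightarrow> inp j = v) \<longrightarrow>
          (\<forall>i k V. i \<notin> F \<longrightarrow> view (ls (\<sigma> k) i) = Some V \<longrightarrow> V = {v})"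
  proof (intro allI impI)
    fix v i k V assume u: "\<forall>j. j \<notin> F \<longrightarrow> inp j = v" and a: "i \<notin> F" "view (ls (\<sigma> k) i) = Some V"
    have "V \<subseteq> {v}"
    proof
      fix x assume "x \<in> V"
      then obtain j where "j \<notin> F" "inp j = x" using P3 a by blast
      then show "x \<in> {v}" using u by auto
    qed
    then show "V = {v}" using view_props(1)[OF a] by blast
  qed
  have P6: "\<forall>i j k k' v w. i \<notin> F \<longrightarrow> j \<notin> F \<longrightarrow> view (ls (\<sigma> k) i) = Some {v} \<longrightarrow>
          view (ls (\<sigma> k') j) = Some {w} \<longrightarrow> v = w" using inclusion by blast
  have P7: "\<forall>i k x. i \<notin> F \<longrightarrow> x \<in> bin (ls (\<sigma> k) i) \<longrightarrow> (\<exists>j. j \<notin> F \<and> inp j = x)"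
    using bina by blast
  have P8: "\<forall>i j k x. i \<notin> F \<longrightarrow> j \<notin> F \<longrightarrow> x \<in> bin (ls (\<sigma> k) i) \<longrightarrow>
          (\<exists>k'. x \<in> bin (ls (\<sigma> k') j))" using binb by blast
  have P9: "\<forall>i. i \<notin> F \<longrightarrow> (\<exists>k. bin (ls (\<sigma> k) i) \<noteq> {})" using binc by blast
  have P10: "\<forall>v. (\<forall>j. j \<notin> F \<longrightarrow> inp j = v) \<longrightarrow>
          (\<forall>i. i \<notin> F \<longrightarrow> (\<exists>k. v \<in> bin (ls (\<sigma> k) i)))" using bind by blast
  have P11: "\<forall>i j k V. i \<notin> F \<longrightarrow> j \<notin> F \<longrightarrow> view (ls (\<sigma> k) j) = Some V \<longrightarrow>
          (\<exists>k'. V \<subseteq> bin (ls (\<sigma> k') i))" using bine by blast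
  show ?thesis using P1 P2 P3 P4 P5 P6 P7 P8 P9 P10 P11 by (intro conjI)
qed

end
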